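(* Let $m$ be an even positive integer and let $a\ge 1$. Let $\mathcal{H}_\infty$ be the $m$-order infinite dimensional generalized Hilbert tensor and, for a positive integer $n$, $\mathcal{H}_n$ the $m$-order $n$-dimensional generalized Hilbert tensor, with entries $$\mathcal{H}_{i_1 i_2\cdots i_m}=\frac{1}{i_1+i_2+\cdots+i_m-m+a}$$ (with $i_1,\dots,i_m$ ranging over all positive integers for $\mathcal{H}_\infty$, and over $\{1,\dots,n\}$ for $\mathcal{H}_n$). Then both are positive definite, i.e. $$\mathcal{H}_\infty x^m=\sum_{i_1,\dots,i_m=1}^\infty \frac{x_{i_1}\cdots x_{i_m}}{i_1+\cdots+i_m-m+a}>0\quad\text{for all nonzero } x\in l^1,$$ $$\mathcal{H}_n x^m=\sum_{i_1,\dots,i_m=1}^n \frac{x_{i_1}\cdots x_{i_m}}{i_1+\cdots+i_m-m+a}>0\quad\text{for all nonzero } x\in\mathbb{R}^n.$$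
   Context: $l^1$ denotes the space of real sequences $x=(x_i)_{i=1}^\infty$ with $\sum_{i=1}^\infty |x_i|<\infty$; the series defining $\mathcal{H}_\infty x^m$ converges absolutely for $x\in l^1$. *)

theory Defs
  imports "HOL-Analysis.Analysis"
begin

text \<open>Sequences x = (x_i)_{i>=1} are modelled as functions nat => real; the value x 0
is irrelevant. Index tuples (i_1,...,i_m) are functions {..<m} => nat (extensional).\<close>

definition ghilbert_entry :: "nat \<Rightarrow> real \<Rightarrow> (nat \<Rightarrow> nat) \<Rightarrow> real" where
  "ghilbert_entry m a i = 1 / ((\<Sum>k<m. real (i k)) - real m + a)"

definition in_l1 :: "(nat \<Rightarrow> real) \<Rightarrow> bool" where
  "in_l1 x \<longleftrightarrow> (\<lambda>i. \<bar>x i\<bar>) summable_on {1..}"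

definition ghilbert_inf_form :: "nat \<Rightarrow> real \<Rightarrow> (nat \<Rightarrow> real) \<Rightarrow> real" where
  "ghilbert_inf_form m a x =
     infsum (\<lambda>i. ghilbert_entry m a i * (\<Prod>k<m. x (i k))) (PiE {..<m} (\<lambda>_. {1..}))"

definition ghilbert_fin_form :: "nat \<Rightarrow> real \<Rightarrow> nat \<Rightarrow> (nat \<Rightarrow> real) \<Rightarrow> real" where
  "ghilbert_fin_form m a n x =
     (\<Sum>i\<in>PiE {..<m} (\<lambda>_. {1..n}). ghilbert_entry m a i * (\<Prod>k<m. x (i k)))"

end

theory Submission
  imports Defs "HOL-Complex_Analysis.Complex_Analysis"
begin

lemma sum_shift_Suc: "(\<Sum>j<n. g (Suc j)) = (\<Sum>i\<in>{1..n}. (g i :: 'b::comm_monoid_add))"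
proof -
  have "Suc ` {..<n} = {1..n}"
  proof
    show "{1..n} \<subseteq> Suc ` {..<n}"
    proof
      fix i assume "i \<in> {1..n}"
      hence "i = Suc (i - 1)" "i - 1 < n" by auto
      thus "i \<in> Suc ` {..<n}" by blast
    qed
  qed auto
  hence "(\<Sum>i\<in>{1..n}. g i) = (\<Sum>i\<in>Suc ` {..<n}. g i)" by simp
  also have "\<dots> = (\<Sum>j<n. g (Suc j))" by (subst sum.reindex) auto
  finally show ?thesis by simp
qed

lemma fin_subset_chain:
  assumes "finite X" "X \<subseteq> (\<Union>n. B n)" "mono (B::nat \<Rightarrow> 'a set)"
  shows "\<exists>N. X \<subseteq> B N"
  using assms(1,2)
proof (induction X rule: finite_induct)
  case empty thus ?case by auto
next
  case (insert x F)
  then obtain n1 where n1: "x \<in> B n1" by auto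
  from insert obtain n2 where n2: "F \<subseteq> B n2" by auto
  have "B n1 \<subseteq> B (max n1 n2)" "B n2 \<subseteq> B (max n1 n2)"
    using monoD[OF assms(3)] by auto
  thus ?case using n1 n2 by blast
qed

lemma infsum_limit_chain:
  fixes h :: "'a \<Rightarrow> real"
  assumes "h summable_on A" "\<And>n. finite (B n)" "mono B" "(\<Union>n. B n) = A"
  shows "(\<lambda>n. sum h (B n)) \<longlonglongrightarrow> infsum h A"
proof -
  have "(sum h \<longlongrightarrow> infsum h A) (finite_subsets_at_top A)"
    using assms(1) has_sum_def summable_iff_has_sum_infsum by blast
  moreover have "filterlim B (finite_subsets_at_top A) sequentially"
    unfolding filterlim_finite_subsets_at_top
  proof (intro allI impI)
    fix X assume X: "finite X \<and> X \<subseteq> A"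
    then obtain N where N: "X \<subseteq> B N" using fin_subset_chain[of X B] assms by auto
    show "\<forall>\<^sub>F y in sequentially. finite (B y) \<and> X \<subseteq> B y \<and> B y \<subseteq> A"
    proof (rule eventually_sequentiallyI[of N])
      fix n assume "N \<le> n"
      hence "B N \<subseteq> B n" using monoD[OF assms(3)] by auto
      thus "finite (B n) \<and> X \<subseteq> B n \<and> B n \<subseteq> A" using N assms by auto
    qed
  qed
  ultimately show ?thesis by (rule filterlim_compose)
qed

lemma entry_bounds:
  assumes "a \<ge> 1" "\<And>k. k < m \<Longrightarrow> I k \<ge> 1"
  shows "0 < ghilbert_entry m a I" "ghilbert_entry m a I \<le> 1"
proof -
  have "(\<Sum>k<m. (1::real)) \<le> (\<Sum>k<m. real (I k))"
    by (intro sum_mono) (use assms(2) in auto)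
  hence D: "(\<Sum>k<m. real (I k)) - real m + a \<ge> 1" using assms(1) by simp
  show "0 < ghilbert_entry m a I" "ghilbert_entry m a I \<le> 1"
    unfolding ghilbert_entry_def using D by auto
qed

lemma powr_integral_term:
  fixes a :: real and N :: nat
  assumes a: "a \<ge> 1"
  shows "((\<lambda>t. t powr (a-1) * t ^ N) has_integral 1 / (real N + a)) {0..1}"
proof -
  have h1: "((\<lambda>t. t powr (real N + a - 1)) has_integral (1 powr (real N + a - 1 + 1) / (real N + a - 1 + 1))) {0..1}"
    by (rule has_integral_powr_from_0) (use a in auto)
  have eq: "t powr (a-1) * t ^ N = t powr (real N + a - 1)" if "t \<in> {0..1}" for t :: real
  proof (cases "t = 0")
    case True thus ?thesis by simp
  next
    case False
    hence "t > 0" using that by auto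
    thus ?thesis by (simp add: powr_realpow[symmetric] powr_add[symmetric] algebra_simps)
  qed
  show ?thesis using h1 by (subst has_integral_cong[OF eq]) auto
qed

lemma fin_integral:
  fixes a :: real
  assumes a: "a \<ge> 1"
  shows "((\<lambda>t. t powr (a-1) * (\<Sum>j<n. x (Suc j) * t^j)^m) has_integral ghilbert_fin_form m a n x) {0..1}"
proof -
  let ?B = "PiE {..<m} (\<lambda>_. {1..n})"
  define N where "N I = (\<Sum>k<m. I k - 1)" for I :: "nat \<Rightarrow> nat"
  have tm: "((\<lambda>t. t powr (a-1) * ((\<Prod>k<m. x (I k)) * t ^ N I)) has_integral
      ghilbert_entry m a I * (\<Prod>k<m. x (I k))) {0..1}" if I: "I \<in> ?B" for I
  proof -
    have "real (N I) = (\<Sum>k<m. real (I k) - 1)" unfolding N_def of_nat_sum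
      by (intro sum.cong) (use I in \<open>auto simp: PiE_iff of_nat_diff\<close>)
    also have "\<dots> = (\<Sum>k<m. real (I k)) - real m" by (simp add: sum_subtractf)
    finally have NI: "ghilbert_entry m a I = 1 / (real (N I) + a)"
      unfolding ghilbert_entry_def by simp
    have "((\<lambda>t. (\<Prod>k<m. x (I k)) * (t powr (a-1) * t ^ N I)) has_integral
        (\<Prod>k<m. x (I k)) * (1 / (real (N I) + a))) {0..1}"
      by (rule has_integral_mult_right[OF powr_integral_term[OF a]])
    thus ?thesis by (simp add: NI mult_ac)
  qed
  have "((\<lambda>t. \<Sum>I\<in>?B. t powr (a-1) * ((\<Prod>k<m. x (I k)) * t ^ N I)) has_integral
      (\<Sum>I\<in>?B. ghilbert_entry m a I * (\<Prod>k<m. x (I k)))) {0..1}"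
    by (rule has_integral_sum) (use tm in \<open>auto simp: finite_PiE\<close>)
  moreover have "(\<Sum>I\<in>?B. t powr (a-1) * ((\<Prod>k<m. x (I k)) * t ^ N I)) =
      t powr (a-1) * (\<Sum>j<n. x (Suc j) * t^j)^m" for t :: real
  proof -
    have "(\<Sum>j<n. x (Suc j) * t^j)^m = (\<Sum>i\<in>{1..n}. x i * t^(i-1))^m"
      by (subst sum_shift_Suc[of "\<lambda>i. x i * t^(i-1)", symmetric]) simp
    also have "\<dots> = (\<Prod>k<m. \<Sum>i\<in>{1..n}. x i * t^(i-1))" by simp
    also have "\<dots> = (\<Sum>I\<in>?B. \<Prod>k<m. x (I k) * t^(I k - 1))"
      by (rule prod_sum_PiE) auto
    also have "\<dots> = (\<Sum>I\<in>?B. (\<Prod>k<m. x (I k)) * t ^ N I)"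
      by (simp add: N_def prod.distrib power_sum)
    finally show ?thesis by (simp add: sum_distrib_left)
  qed
  ultimately show ?thesis unfolding ghilbert_fin_form_def by simp
qed

lemma l1_summable:
  assumes "in_l1 x"
  shows "summable (\<lambda>j. \<bar>x (Suc j)\<bar>)"
proof -
  have "{1..} = Suc ` (UNIV::nat set)"
  proof
    show "{1..} \<subseteq> range Suc"
    proof
      fix i :: nat assume "i \<in> {1..}"
      hence "i = Suc (i - 1)" by auto
      thus "i \<in> range Suc" by blast
    qed
  qed auto
  with assms have "(\<lambda>i. \<bar>x i\<bar>) summable_on Suc ` UNIV" unfolding in_l1_def by simp
  hence "((\<lambda>i. \<bar>x i\<bar>) \<circ> Suc) summable_on UNIV" by (subst (asm) summable_on_reindex) auto
  thus ?thesis by (subst (asm) summable_on_UNIV_nonneg_real_iff) (auto simp: o_def)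
qed

lemma PiE_chain:
  "(\<Union>n. PiE {..<m::nat} (\<lambda>_. {1..n::nat})) = PiE {..<m} (\<lambda>_. {1..})"
proof
  show "(\<Union>n. PiE {..<m} (\<lambda>_. {1..n::nat})) \<subseteq> PiE {..<m} (\<lambda>_. {1..})"
    by (intro UN_least PiE_mono) auto
  show "PiE {..<m} (\<lambda>_. {1..}) \<subseteq> (\<Union>n. PiE {..<m} (\<lambda>_. {1..n::nat}))"
  proof
    fix I assume I: "I \<in> PiE {..<m} (\<lambda>_. {1::nat..})"
    have "I k \<le> (\<Sum>k<m. I k)" if "k < m" for k
      by (rule member_le_sum) (use that in auto)
    hence "I \<in> PiE {..<m} (\<lambda>_. {1..(\<Sum>k<m. I k)})" using I unfolding PiE_iff by auto
    thus "I \<in> (\<Union>n. PiE {..<m} (\<lambda>_. {1..n}))" by blast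
  qed
qed

lemma PiE_mono_chain: "mono (\<lambda>n. PiE {..<m::nat} (\<lambda>_. {1..n::nat}))"
  by (rule monoI, rule PiE_mono) auto

lemma inf_summable:
  assumes a: "a \<ge> 1" and l1: "in_l1 x"
  shows "(\<lambda>I. ghilbert_entry m a I * (\<Prod>k<m. x (I k))) summable_on PiE {..<m} (\<lambda>_. {1..})"
proof (rule abs_summable_summable, rule nonneg_bdd_above_summable_on)
  let ?A = "PiE {..<m} (\<lambda>_. {1::nat..})"
  let ?h = "\<lambda>I. norm (ghilbert_entry m a I * (\<Prod>k<m. x (I k)))"
  define L where "L = suminf (\<lambda>j. \<bar>x (Suc j)\<bar>)"
  have sm: "summable (\<lambda>j. \<bar>x (Suc j)\<bar>)" using l1 by (rule l1_summable)
  show "bdd_above (sum ?h ` {F. F \<subseteq> ?A \<and> finite F})"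
  proof (rule bdd_aboveI)
    fix s assume "s \<in> sum ?h ` {F. F \<subseteq> ?A \<and> finite F}"
    then obtain F where F: "finite F" "F \<subseteq> ?A" and s: "s = sum ?h F" by auto
    have "F \<subseteq> (\<Union>n. PiE {..<m} (\<lambda>_. {1..n}))" using F(2) by (simp only: PiE_chain)
    then obtain N where N: "F \<subseteq> PiE {..<m} (\<lambda>_. {1..N})"
      using fin_subset_chain[OF F(1) _ PiE_mono_chain] by blast
    have "s \<le> sum ?h (PiE {..<m} (\<lambda>_. {1..N}))"
      unfolding s by (rule sum_mono2) (use N in \<open>auto simp: finite_PiE\<close>)
    also have "\<dots> \<le> (\<Sum>I\<in>PiE {..<m} (\<lambda>_. {1..N}). \<Prod>k<m. \<bar>x (I k)\<bar>)"
    proof (rule sum_mono)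
      fix I assume I: "I \<in> PiE {..<m} (\<lambda>_. {1..N})"
      have e: "0 < ghilbert_entry m a I" "ghilbert_entry m a I \<le> 1"
        using entry_bounds[OF a, of m I] I by (auto simp: PiE_iff)
      have "?h I = ghilbert_entry m a I * (\<Prod>k<m. \<bar>x (I k)\<bar>)"
        using e by (simp add: abs_mult abs_prod)
      also have "\<dots> \<le> 1 * (\<Prod>k<m. \<bar>x (I k)\<bar>)"
        by (rule mult_right_mono) (use e in \<open>auto simp: prod_nonneg\<close>)
      finally show "?h I \<le> (\<Prod>k<m. \<bar>x (I k)\<bar>)" by simp
    qed
    also have "\<dots> = (\<Prod>k<m. \<Sum>i\<in>{1..N}. \<bar>x i\<bar>)"
      by (rule prod_sum_PiE[symmetric]) auto
    also have "\<dots> = (\<Sum>i\<in>{1..N}. \<bar>x i\<bar>) ^ m" by simp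
    also have "\<dots> \<le> L ^ m"
    proof (rule power_mono)
      have "(\<Sum>i\<in>{1..N}. \<bar>x i\<bar>) = (\<Sum>j<N. \<bar>x (Suc j)\<bar>)"
        by (rule sum_shift_Suc[symmetric])
      also have "\<dots> \<le> L" unfolding L_def by (rule sum_le_suminf[OF sm]) auto
      finally show "(\<Sum>i\<in>{1..N}. \<bar>x i\<bar>) \<le> L" .
    qed (auto simp: sum_nonneg)
    finally show "s \<le> L ^ m" .
  qed
qed auto

lemma inf_pos:
  fixes m :: nat and a :: real
  assumes m: "even m" and a: "a \<ge> 1" and l1: "in_l1 x" and nz: "\<exists>i\<ge>1. x i \<noteq> 0"
  shows "ghilbert_inf_form m a x > 0"
proof -
  define c where "c j = x (Suc j)" for j
  have sm: "summable (\<lambda>j. \<bar>c j\<bar>)" unfolding c_def using l1 by (rule l1_summable)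
  define L where "L = suminf (\<lambda>j. \<bar>c j\<bar>)"
  define P where "P n t = (\<Sum>j<n. c j * t^j)" for n and t :: real
  define X where "X t = (\<Sum>j. c j * t^j)" for t :: real
  have cle: "\<bar>c j * t^j\<bar> \<le> \<bar>c j\<bar>" if "\<bar>t\<bar> \<le> 1" for j and t :: real
    using that by (auto simp: abs_mult power_abs intro!: mult_left_le power_le_one)
  have summ_t: "summable (\<lambda>j. c j * t^j)" if "\<bar>t\<bar> \<le> 1" for t :: real
    by (rule summable_comparison_test[OF _ sm]) (use cle[OF that] in auto)
  have Pb: "\<bar>P n t\<bar> \<le> L" if "\<bar>t\<bar> \<le> 1" for n t
  proof -
    have "\<bar>P n t\<bar> \<le> (\<Sum>j<n. \<bar>c j * t^j\<bar>)" unfolding P_def by (rule sum_abs)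
    also have "\<dots> \<le> (\<Sum>j<n. \<bar>c j\<bar>)" by (intro sum_mono cle that)
    also have "\<dots> \<le> L" unfolding L_def by (rule sum_le_suminf[OF sm]) auto
    finally show ?thesis .
  qed
  have Pc: "(\<lambda>n. P n t) \<longlonglongrightarrow> X t" if "\<bar>t\<bar> \<le> 1" for t
    unfolding P_def X_def by (rule summable_LIMSEQ[OF summ_t[OF that]])
  define F where "F n t = t powr (a-1) * (P n t)^m" for n t
  define G where "G t = t powr (a-1) * (X t)^m" for t
  have Fint: "(F n has_integral ghilbert_fin_form m a n x) {0..1}" for n
    unfolding F_def P_def c_def by (rule fin_integral[OF a])
  have pw: "\<bar>t powr (a-1)\<bar> \<le> 1" if "t \<in> {0..1}" for t :: real
    using that a by (auto intro!: powr_le1)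
  have dc: "G integrable_on {0..1}" "(\<lambda>n. integral {0..1} (F n)) \<longlonglongrightarrow> integral {0..1} G"
  proof -
    have 1: "F k integrable_on {0..1}" for k using Fint by blast
    have 2: "(\<lambda>_. L^m) integrable_on {0..1::real}"
      using has_integral_const_real[of "L^m" 0 1] by (rule has_integral_integrable)
    have 3: "norm (F k t) \<le> L^m" if "t \<in> {0..1}" for k t
    proof -
      have "norm (F k t) = \<bar>t powr (a-1)\<bar> * \<bar>P k t\<bar>^m" by (simp add: F_def abs_mult power_abs)
      also have "\<dots> \<le> 1 * L^m"
        by (intro mult_mono power_mono pw that Pb) (use that in auto)
      finally show ?thesis by simp
    qed
    have 4: "(\<lambda>k. F k t) \<longlonglongrightarrow> G t" if "t \<in> {0..1}" for t
      unfolding F_def G_def by (intro tendsto_mult_left tendsto_power Pc) (use that in auto)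
    show "G integrable_on {0..1}" "(\<lambda>n. integral {0..1} (F n)) \<longlonglongrightarrow> integral {0..1} G"
      using dominated_convergence[of F "{0..1}" "\<lambda>_. L^m" G, OF 1 2 3 4] by auto
  qed
  have lim1: "(\<lambda>n. ghilbert_fin_form m a n x) \<longlonglongrightarrow> integral {0..1} G"
  proof -
    have Fi: "integral {0..1} (F n) = ghilbert_fin_form m a n x" for n
      by (rule integral_unique[OF Fint])
    show ?thesis using dc(2) unfolding Fi .
  qed
  have lim2: "(\<lambda>n. ghilbert_fin_form m a n x) \<longlonglongrightarrow> ghilbert_inf_form m a x"
    unfolding ghilbert_fin_form_def ghilbert_inf_form_def
    by (rule infsum_limit_chain[OF inf_summable[OF a l1] _ PiE_mono_chain PiE_chain])
       (auto simp: finite_PiE)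
  have eqI: "ghilbert_inf_form m a x = integral {0..1} G" by (rule LIMSEQ_unique[OF lim2 lim1])
  have Xcont: "isCont X t" if "\<bar>t\<bar> < 1" for t
    unfolding X_def by (rule isCont_powser[of c 1]) (use summ_t[of 1] that in auto)
  obtain i where i: "i \<ge> 1" "x i \<noteq> 0" using nz by auto
  have cj: "c (i - 1) \<noteq> 0" using i unfolding c_def by simp
  have "\<exists>t0. 0 < t0 \<and> t0 < 1 \<and> X t0 \<noteq> 0"
  proof (cases "X 0 = 0")
    case False
    have "(X \<longlongrightarrow> X 0) (at 0)" using Xcont[of 0] isCont_def by auto
    hence "eventually (\<lambda>t. X t \<noteq> 0) (at 0)" using False tendsto_imp_eventually_ne by blast
    hence "eventually (\<lambda>t. X t \<noteq> 0) (at_right 0)" by (simp add: eventually_at_split)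
    moreover have "eventually (\<lambda>t. 0 < t \<and> t < (1::real)) (at_right 0)"
      by (auto simp: eventually_at_right_field intro!: exI[of _ 1])
    ultimately have "eventually (\<lambda>t. 0 < t \<and> t < 1 \<and> X t \<noteq> 0) (at_right 0)"
      by eventually_elim auto
    thus ?thesis using eventually_happens[of _ "at_right (0::real)"] by auto
  next
    case True
    have "X 0 = c 0" unfolding X_def using powser_zero[of c] by simp
    hence "c 0 = 0" using True by simp
    hence pos: "i - 1 > 0" using cj by (cases "i - 1") auto
    have sums: "(\<lambda>n. c n * (t - 0) ^ n) sums X t" if "norm (t - 0) < 1" for t :: real
      unfolding X_def using summ_t[of t] that by (auto intro!: summable_sums)
    obtain s where s: "0 < s" "\<And>z. z \<in> cball 0 s - {0} \<Longrightarrow> X z \<noteq> 0"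
      using powser_0_nonzero[of 1 0 c X "i - 1", OF _ sums True cj pos] by auto
    have "min s (1/2) \<in> cball 0 s - {0}" using s by auto
    thus ?thesis using s by (intro exI[of _ "min s (1/2)"]) auto
  qed
  then obtain t0 where t0: "0 < t0" "t0 < 1" "X t0 \<noteq> 0" by blast
  define t1 where "t1 = t0 / 2"
  define t2 where "t2 = (1 + t0) / 2"
  have sub: "{t1..t2} \<subseteq> {0..1}" using t0 by (auto simp: t1_def t2_def)
  have Gnn: "0 \<le> G t" if "t \<in> {0..1}" for t
    unfolding G_def using that m by (auto intro!: mult_nonneg_nonneg zero_le_even_power)
  have Gcont: "continuous_on {t1..t2} G"
  proof (rule continuous_at_imp_continuous_on, intro ballI)
    fix t assume t: "t \<in> {t1..t2}"
    hence tt: "0 < t" "t < 1" using t0 by (auto simp: t1_def t2_def)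
    have "isCont X t" using Xcont[of t] tt by auto
    thus "isCont G t" unfolding G_def using tt by (intro continuous_intros) auto
  qed
  show ?thesis
  proof (rule ccontr)
    assume "\<not> ?thesis"
    hence le0: "integral {0..1} G \<le> 0" using eqI by simp
    have Gi: "G integrable_on {t1..t2}" by (rule integrable_subinterval_real[OF dc(1) sub])
    have "integral {t1..t2} G \<le> integral {0..1} G"
      by (rule integral_subset_le[OF sub Gi dc(1)]) (use Gnn in auto)
    moreover have "0 \<le> integral {t1..t2} G"
      by (rule Henstock_Kurzweil_Integration.integral_nonneg[OF Gi]) (use Gnn sub in auto)
    ultimately have "integral {t1..t2} G = 0" using le0 by simp
    hence hi: "(G has_integral 0) (cbox t1 t2)" using integrable_integral[OF Gi] by simp
    have "G t0 = 0"
      by (rule has_integral_0_cbox_imp_0[OF _ _ hi])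
         (use Gcont Gnn sub t0 in \<open>auto simp: t1_def t2_def\<close>)
    moreover have "G t0 \<noteq> 0" unfolding G_def using t0 by simp
    ultimately show False by simp
  qed
qed

theorem theorem3p1:
  fixes m :: nat and a :: real
  assumes "even m" and "m > 0" and "a \<ge> 1"
  shows "(\<forall>x. in_l1 x \<and> (\<exists>i\<ge>1. x i \<noteq> 0) \<longrightarrow> ghilbert_inf_form m a x > 0)
       \<and> (\<forall>n::nat. n \<ge> 1 \<longrightarrow>
            (\<forall>x. (\<exists>i\<in>{1..n}. x i \<noteq> 0) \<longrightarrow> ghilbert_fin_form m a n x > 0))"
proof (intro conjI allI impI)
  fix x assume "in_l1 x \<and> (\<exists>i\<ge>1. x i \<noteq> 0)"
  thus "ghilbert_inf_form m a x > 0" using inf_pos[OF assms(1) assms(3)] by blast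
next
  fix n :: nat and x :: "nat \<Rightarrow> real"
  assume nz: "\<exists>i\<in>{1..n}. x i \<noteq> 0"
  define y where "y i = (if i \<in> {1..n} then x i else 0)" for i
  have "(\<lambda>i. \<bar>y i\<bar>) summable_on {1..} \<longleftrightarrow> (\<lambda>i. \<bar>y i\<bar>) summable_on {1..n}"
    by (rule summable_on_cong_neutral) (auto simp: y_def)
  hence l1: "in_l1 y" unfolding in_l1_def by simp
  have nzy: "\<exists>i\<ge>1. y i \<noteq> 0" using nz by (auto simp: y_def)
  have pos: "ghilbert_inf_form m a y > 0" by (rule inf_pos[OF assms(1) assms(3) l1 nzy])
  have "ghilbert_inf_form m a y = ghilbert_fin_form m a n y"
    unfolding ghilbert_inf_form_def ghilbert_fin_form_def
  proof (subst infsum_cong_neutral[where T = "PiE {..<m} (\<lambda>_. {1..n})"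
        and g = "\<lambda>I. ghilbert_entry m a I * (\<Prod>k<m. y (I k))"])
    fix I assume I: "I \<in> PiE {..<m} (\<lambda>_. {1..}) - PiE {..<m} (\<lambda>_. {1..n})"
    then obtain k where k: "k < m" "I k \<notin> {1..n}" by (auto simp: PiE_iff)
    hence "(\<Prod>k<m. y (I k)) = 0" by (subst prod_zero_iff) (auto simp: y_def)
    thus "ghilbert_entry m a I * (\<Prod>k<m. y (I k)) = 0" by simp
  next
    fix I assume "I \<in> PiE {..<m} (\<lambda>_. {1..n}) - PiE {..<m} (\<lambda>_. {1..})"
    hence False by (auto simp: PiE_iff)
    thus "ghilbert_entry m a I * (\<Prod>k<m. y (I k)) = 0" ..
  qed (auto simp: finite_PiE)
  also have "\<dots> = ghilbert_fin_form m a n x"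
    unfolding ghilbert_fin_form_def
  proof (rule sum.cong[OF refl])
    fix I assume I: "I \<in> PiE {..<m} (\<lambda>_. {1..n})"
    have "(\<Prod>k<m. y (I k)) = (\<Prod>k<m. x (I k))"
      by (rule prod.cong[OF refl]) (use I in \<open>auto simp: y_def PiE_iff\<close>)
    thus "ghilbert_entry m a I * (\<Prod>k<m. y (I k)) = ghilbert_entry m a I * (\<Prod>k<m. x (I k))"
      by simp
  qed
  finally show "ghilbert_fin_form m a n x > 0" using pos by simp
qed

end
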